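(* Let $N\ge 2$. Every isometry $T$ of $W_N$ (a bijection $T:W_N\to W_N$ with $\|T(\mathbf u)-T(\mathbf v)\|=\|\mathbf u-\mathbf v\|$ for all $\mathbf u,\mathbf v\in W_N$) satisfies $T(\mathbf 0)=\mathbf 0$, and consequently $T$ permutes the set of vertices $\{\mathbf v_1,\dots,\mathbf v_N\}$.
   Context: Let $N\ge 2$ be an integer and $\mathbb T=\{z\in\mathbb C:|z|=1\}$. For $\mathbf a=(a_1,\dots,a_{N-1})\in\mathbb R^{N-1}$ define $\mathbf c=(c_1,\dots,c_{N-1})\in\mathbb C^{N-1}$ by $c_j=\frac{\sqrt2}{2}(a_j+i\,a_{N-j})$ for $1\le j<N/2$, $c_{N/2}=a_{N/2}$ (only when $N$ is even), and $c_j=\frac{\sqrt2}{2}(a_{N-j}-i\,a_j)$ for $N/2<j\le N-1$ (so $c_{N-j}=\overline{c_j}$). Associate to $\mathbf a$ the monic polynomial $\mathbf a(x)=x^N+\sum_{n=1}^{N-1}c_nx^{N-n}+1$. Define $W_N=\{\mathbf a\in\mathbb R^{N-1}:\text{all roots of }\mathbf a(x)\text{ lie in }\mathbb T\}$, with the Euclidean metric; note $\mathbf 0\in W_N$ corresponds to $x^N+1$. Let $\zeta_N=e^{2\pi i/N}$. The vertices $\mathbf v_1,\dots,\mathbf v_N\in W_N$ are defined by $\mathbf v_n(x)=(x+\zeta_N^n)^N$, $1\le n\le N$. *)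

theory Defs
  imports "HOL-Analysis.Analysis" "HOL-Computational_Algebra.Polynomial"
begin

text \<open>Vectors of R^(N-1) are represented as functions nat => real whose
  coordinates are indexed by 1..N-1 and vanish outside that range.\<close>

definition vecs :: "nat \<Rightarrow> (nat \<Rightarrow> real) set" where
  "vecs N = {a. \<forall>j. (j < 1 \<or> N \<le> j) \<longrightarrow> a j = 0}"

definition edist :: "nat \<Rightarrow> (nat \<Rightarrow> real) \<Rightarrow> (nat \<Rightarrow> real) \<Rightarrow> real" where
  "edist N a b = sqrt (\<Sum>j=1..N-1. (a j - b j)^2)"

definition ccoef :: "nat \<Rightarrow> (nat \<Rightarrow> real) \<Rightarrow> nat \<Rightarrow> complex" where
  "ccoef N a j =
     (if 2 * j < N then complex_of_real (sqrt 2 / 2) * (complex_of_real (a j) + \<i> * complex_of_real (a (N - j)))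
      else if 2 * j = N then complex_of_real (a j)
      else complex_of_real (sqrt 2 / 2) * (complex_of_real (a (N - j)) - \<i> * complex_of_real (a j)))"

definition apoly :: "nat \<Rightarrow> (nat \<Rightarrow> real) \<Rightarrow> complex poly" where
  "apoly N a = monom 1 N + (\<Sum>n=1..N-1. monom (ccoef N a n) (N - n)) + 1"

definition W :: "nat \<Rightarrow> (nat \<Rightarrow> real) set" where
  "W N = {a \<in> vecs N. \<forall>z. poly (apoly N a) z = 0 \<longrightarrow> cmod z = 1}"

definition zetaN :: "nat \<Rightarrow> complex" where
  "zetaN N = cis (2 * pi / real N)"

definition vertex :: "nat \<Rightarrow> nat \<Rightarrow> (nat \<Rightarrow> real)" where
  "vertex N n = (THE a. a \<in> vecs N \<and> apoly N a = [:zetaN N ^ n, 1:] ^ N)"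

end

theory Submission
  imports Defs "HOL-Computational_Algebra.Fundamental_Theorem_Algebra"
begin

lemma ccoef_diff: "ccoef N u n - ccoef N v n = ccoef N (\<lambda>j. u j - v j) n"
  by (simp add: ccoef_def algebra_simps)

lemma cmod_ccoef_sq: "cmod (ccoef N x n)^2 = (x n^2 + x (N-n)^2)/2"
proof -
  have s: "(sqrt 2 / 2)^2 = (1/2::real)" by (simp add: power_divide)
  show ?thesis
  proof (cases "2*n < N")
    case True then show ?thesis
      by (simp add: ccoef_def cmod_power2 power_mult_distrib s field_simps)
  next
    case False
    show ?thesis
    proof (cases "2*n = N")
      case True then have "N - n = n" by auto
      then show ?thesis using True by (simp add: ccoef_def cmod_power2)
    next
      case False2: False
      then show ?thesis using False
        by (simp add: ccoef_def cmod_power2 power_mult_distrib s field_simps)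
    qed
  qed
qed

lemma norm_eq: "(\<Sum>j=1..N-1. x j^2) = (\<Sum>n=1..N-1. cmod (ccoef N x n)^2)"
proof -
  have "(\<Sum>n=1..N-1. cmod (ccoef N x n)^2) = (\<Sum>n=1..N-1. x n^2)/2 + (\<Sum>n=1..N-1. x (N-n)^2)/2"
    by (simp add: cmod_ccoef_sq sum_divide_distrib[symmetric] sum.distrib add_divide_distrib)
  also have "(\<Sum>n=1..N-1. x (N-n)^2) = (\<Sum>n=1..N-1. x n^2)"
    by (subst sum.atLeastAtMost_rev) (intro sum.cong refl, auto)
  finally show ?thesis by simp
qed

lemma edist_sq: "edist N u v ^2 = (\<Sum>n=1..N-1. cmod (ccoef N u n - ccoef N v n)^2)"
  unfolding edist_def ccoef_diff
  using norm_eq[of "\<lambda>j. u j - v j" N]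
  by (subst real_sqrt_pow2) (auto intro: sum_nonneg)

lemma coeff_apoly:
  assumes "N \<ge> 2"
  shows "coeff (apoly N a) k = (if k = 0 \<or> k = N then 1 else if k < N then ccoef N a (N-k) else 0)"
proof -
  have c: "coeff (\<Sum>n=1..N-1. monom (ccoef N a n) (N - n)) k =
     (if 1 \<le> k \<and> k < N then ccoef N a (N-k) else 0)"
  proof -
    have "coeff (\<Sum>n=1..N-1. monom (ccoef N a n) (N - n)) k =
       (\<Sum>n\<in>{1..N-1}. if n = N - k then ccoef N a n else 0)"
      unfolding coeff_sum coeff_monom
      by (intro sum.cong refl) auto
    also have "\<dots> = (if 1 \<le> k \<and> k < N then ccoef N a (N-k) else 0)"
      by (subst sum.delta) auto
    finally show ?thesis .
  qed
  show ?thesis using assms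
    unfolding apoly_def coeff_add c coeff_monom coeff_1 by auto
qed

lemma degree_apoly: "N \<ge> 2 \<Longrightarrow> degree (apoly N a) = N"
  by (rule order_antisym; (rule degree_le le_degree)?) (auto simp: coeff_apoly)

lemma lead_apoly: "N \<ge> 2 \<Longrightarrow> lead_coeff (apoly N a) = 1"
  by (simp add: degree_apoly coeff_apoly)

lemma apoly_inj:
  assumes "N \<ge> 2" "a \<in> vecs N" "b \<in> vecs N" "apoly N a = apoly N b"
  shows "a = b"
proof -
  have cc: "ccoef N a n = ccoef N b n" if "1 \<le> n" "n \<le> N-1" for n
  proof -
    have "coeff (apoly N a) (N-n) = coeff (apoly N b) (N-n)" using assms by simp
    moreover have "N - (N-n) = n" "N - n \<noteq> 0" "N - n \<noteq> N" "N - n < N" using that assms(1) by auto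
    ultimately show ?thesis using that assms(1) by (simp add: coeff_apoly)
  qed
  have "(\<Sum>j=1..N-1. (a j - b j)^2) = (\<Sum>n=1..N-1. cmod (ccoef N a n - ccoef N b n)^2)"
    using norm_eq[of "\<lambda>j. a j - b j" N] by (simp add: ccoef_diff)
  also have "\<dots> = 0" by (intro sum.neutral) (auto simp: cc)
  finally have "\<forall>j\<in>{1..N-1}. (a j - b j)^2 = 0"
    by (subst (asm) sum_nonneg_eq_0_iff) auto
  then have "a j = b j" for j using assms(2,3) unfolding vecs_def
    by (cases "j < 1 \<or> N \<le> j") auto
  then show ?thesis by auto
qed

definition vinv :: "nat \<Rightarrow> (nat \<Rightarrow> complex) \<Rightarrow> nat \<Rightarrow> real" where
  "vinv N b j = (if 1 \<le> j \<and> 2*j < N then sqrt 2 * Re (b j) else if 2*j = N then Re (b j)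
     else if N < 2*j \<and> j < N then sqrt 2 * Im (b (N-j)) else 0)"

lemma vinv_vecs: "N \<ge> 2 \<Longrightarrow> vinv N b \<in> vecs N"
  by (auto simp: vecs_def vinv_def)

lemma ccoef_vinv:
  assumes "N \<ge> 2" "\<And>n. 1 \<le> n \<Longrightarrow> n \<le> N-1 \<Longrightarrow> b (N-n) = cnj (b n)"
    "1 \<le> n" "n \<le> N-1"
  shows "ccoef N (vinv N b) n = b n"
proof -
  have s: "sqrt 2 / 2 * sqrt 2 = (1::real)" by simp
  consider "2*n < N" | "2*n = N" | "2*n > N" by linarith
  then show ?thesis
  proof cases
    case 1
    then have "vinv N b n = sqrt 2 * Re (b n)" "vinv N b (N-n) = sqrt 2 * Im (b n)"
      using assms by (auto simp: vinv_def)
    then show ?thesis using 1 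
      by (simp add: ccoef_def complex_eq_iff mult.assoc[symmetric] s)
  next
    case 2
    then have "N - n = n" by simp
    then have "b n = cnj (b n)" using assms(2)[of n] assms by auto
    then have "Im (b n) = 0" by (metis complex_cnj_cancel_iff complex_eq_iff zero_complex.simps(2) cnj.sel(2) neg_equal_zero)
    then show ?thesis using 2 assms by (simp add: ccoef_def vinv_def complex_eq_iff)
  next
    case 3
    then have "vinv N b n = sqrt 2 * Im (b (N-n))" "vinv N b (N-n) = sqrt 2 * Re (b (N-n))"
      using assms by (auto simp: vinv_def)
    moreover have "b n = cnj (b (N-n))" using assms(2)[of "N-n"] assms by auto
    ultimately show ?thesis using 3
      by (simp add: ccoef_def complex_eq_iff mult.assoc[symmetric] s)
  qed
qed

lemma zeta_pow: "zetaN N ^ k = cis (2 * pi * real k / real N)"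
  unfolding zetaN_def Complex.DeMoivre by (simp add: mult_ac)

lemma norm_zeta [simp]: "norm (zetaN N) = 1"
  by (simp add: zetaN_def)

lemma zeta_N: "N > 0 \<Longrightarrow> zetaN N ^ N = 1"
  by (simp add: zeta_pow)

lemma zeta_mult_N: "N > 0 \<Longrightarrow> zetaN N ^ (m * N) = 1"
  by (metis power_mult mult.commute power_one zeta_N)

lemma cnj_zeta:
  assumes "N > 0" "n \<le> N"
  shows "cnj (zetaN N ^ (m*n)) = zetaN N ^ (m*(N-n))"
proof -
  have "zetaN N ^ (m*(N-n)) * zetaN N ^ (m*n) = 1"
  proof -
    have e: "m*(N-n) + m*n = m*N" using assms
      by (metis add.commute distrib_left le_add_diff_inverse)
    have "zetaN N ^ (m*(N-n)) * zetaN N ^ (m*n) = zetaN N ^ (m*N)"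
      by (simp only: power_add[symmetric] e)
    then show ?thesis using zeta_mult_N[OF assms(1)] by simp
  qed
  moreover have "cnj (zetaN N ^ (m*n)) * zetaN N ^ (m*n) = 1"
    by (metis complex_cnj_mult complex_norm_square mult.commute norm_power norm_zeta of_real_1 power_one one_power2)
  ultimately show ?thesis
    by (metis mult_cancel_right mult_zero_left zero_neq_one)
qed

definition bv :: "nat \<Rightarrow> nat \<Rightarrow> nat \<Rightarrow> complex" where
  "bv N m n = of_nat (N choose n) * zetaN N ^ (m*n)"

lemma bv_sym: "N > 0 \<Longrightarrow> n \<le> N \<Longrightarrow> bv N m (N-n) = cnj (bv N m n)"
  unfolding bv_def using cnj_zeta[of N n m]
  by (simp add: binomial_symmetric[of n N] )

definition vtx :: "nat \<Rightarrow> nat \<Rightarrow> nat \<Rightarrow> real" where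
  "vtx N m = vinv N (bv N m)"

lemma ccoef_vtx: "N \<ge> 2 \<Longrightarrow> 1 \<le> n \<Longrightarrow> n \<le> N-1 \<Longrightarrow> ccoef N (vtx N m) n = bv N m n"
  unfolding vtx_def by (rule ccoef_vinv) (auto intro: bv_sym)

lemma apoly_vtx:
  assumes "N \<ge> 2"
  shows "apoly N (vtx N m) = [:zetaN N ^ m, 1:] ^ N"
proof (rule poly_eqI)
  fix k
  show "coeff (apoly N (vtx N m)) k = coeff ([:zetaN N ^ m, 1:] ^ N) k"
  proof (cases "k \<le> N")
    case True
    then have r: "coeff ([:zetaN N ^ m, 1:] ^ N) k = of_nat (N choose k) * zetaN N ^ (m * (N-k))"
      by (simp add: coeff_linear_poly_power power_mult)
    show ?thesis
    proof (cases "k = 0 \<or> k = N")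
      case True then show ?thesis using assms r
        by (auto simp: coeff_apoly zeta_mult_N)
    next
      case False
      then have "N - (N - k) = k" "N - k \<le> N-1" "1 \<le> N - k" using \<open>k \<le> N\<close> by auto
      then show ?thesis using False \<open>k \<le> N\<close> assms r
        by (simp add: coeff_apoly ccoef_vtx bv_def binomial_symmetric[of k N])
    qed
  next
    case False
    then show ?thesis using assms
      by (simp add: coeff_apoly coeff_eq_0 degree_linear_power)
  qed
qed

lemma vertex_eq: "N \<ge> 2 \<Longrightarrow> vertex N m = vtx N m"
proof -
  assume N: "N \<ge> 2"
  have v: "vtx N m \<in> vecs N" by (simp add: vtx_def vinv_vecs N)
  show ?thesis unfolding vertex_def
  proof (rule the_equality)
    show "vtx N m \<in> vecs N \<and> apoly N (vtx N m) = [:zetaN N ^ m, 1:] ^ N" using v apoly_vtx N by simp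
    fix a assume "a \<in> vecs N \<and> apoly N a = [:zetaN N ^ m, 1:] ^ N"
    then show "a = vtx N m" using v apoly_vtx[OF N] N by (intro apoly_inj) auto
  qed
qed

lemma vtx_W: "N \<ge> 2 \<Longrightarrow> vtx N m \<in> W N"
proof -
  assume N: "N \<ge> 2"
  have "cmod z = 1" if "poly (apoly N (vtx N m)) z = 0" for z
  proof -
    have "(zetaN N ^ m + z) ^ N = 0" using that N by (simp add: apoly_vtx poly_power)
    then have "zetaN N ^ m + z = 0" by simp
    then have "z = -(zetaN N ^ m)" by (metis add_eq_0_iff2 minus_minus)
    then show ?thesis by (simp add: norm_power)
  qed
  then show ?thesis using N by (auto simp: W_def vtx_def vinv_vecs)
qed

lemma zero_W: "N \<ge> 2 \<Longrightarrow> (\<lambda>_. 0) \<in> W N"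
proof -
  assume N: "N \<ge> 2"
  have "cmod z = 1" if "poly (apoly N (\<lambda>_. 0)) z = 0" for z
  proof -
    have "ccoef N (\<lambda>_. 0) n = 0" for n by (simp add: ccoef_def)
    then have "z ^ N + 1 = 0" using that by (simp add: apoly_def poly_monom)
    then have "z ^ N = -1" by (simp add: eq_neg_iff_add_eq_0)
    then have "norm z ^ N = 1" by (metis norm_minus_cancel norm_one norm_power)
    then have "norm (norm z) = 1 \<or> N = 0" by (rule power_eq_1_iff)
    then show ?thesis using N by simp
  qed
  then show ?thesis by (auto simp: W_def vecs_def)
qed


lemma coeff_mult_lin0: "coeff (q * [:c::complex, 1:]) 0 = c * coeff q 0"
  by (simp add: mult.commute[of q])

lemma coeff_mult_linS: "coeff (q * [:c::complex, 1:]) (Suc k) = c * coeff q (Suc k) + coeff q k"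
  by (simp add: mult.commute[of q])

lemma Q_high: "k > n \<Longrightarrow> coeff (\<Prod>i<n. [:- (r::nat\<Rightarrow>complex) i, 1:]) k = 0"
proof (induction n arbitrary: k)
  case 0 then show ?case by simp
next
  case (Suc n)
  then obtain j where "k = Suc j" "j > n" by (cases k) auto
  then show ?case using Suc by (simp add: coeff_mult_linS)
qed

lemma Q_lead: "coeff (\<Prod>i<n. [:- (r::nat\<Rightarrow>complex) i, 1:]) n = 1"
proof (induction n)
  case 0 then show ?case by simp
next
  case (Suc n)
  then show ?case by (simp add: coeff_mult_linS Q_high)
qed

lemma Q_sub: "coeff (\<Prod>i<Suc n. [:- (r::nat\<Rightarrow>complex) i, 1:]) n = - (\<Sum>i<Suc n. r i)"
proof (induction n)
  case 0 then show ?case by simp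
next
  case (Suc n)
  have "coeff (\<Prod>i<Suc (Suc n). [:- r i, 1:]) (Suc n) =
     - r (Suc n) * coeff (\<Prod>i<Suc n. [:- r i, 1:]) (Suc n) + coeff (\<Prod>i<Suc n. [:- r i, 1:]) n"
    by (simp add: coeff_mult_linS)
  also have "\<dots> = - (\<Sum>i<Suc (Suc n). r i)"
    by (simp only: Q_lead[where n="Suc n" and r=r] Suc.IH) (simp add: algebra_simps)
  finally show ?case .
qed

lemma Q_bound: "(\<forall>i<n. cmod (r i) = 1) \<Longrightarrow> cmod (coeff (\<Prod>i<n. [:- r i, 1:]) k) \<le> real (n choose k)"
proof (induction n arbitrary: k)
  case 0 then show ?case by (cases k) auto
next
  case (Suc n)
  let ?q = "\<Prod>i<n. [:- r i, 1:]"
  have IH: "cmod (coeff ?q j) \<le> real (n choose j)" for j using Suc by auto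
  have rn: "cmod (r n) = 1" using Suc by auto
  show ?case
  proof (cases k)
    case 0
    then show ?thesis using IH[of 0] rn by (simp add: coeff_mult_lin0 norm_mult)
  next
    case (Suc j)
    have "cmod (coeff (?q * [:- r n, 1:]) (Suc j)) = cmod (- r n * coeff ?q (Suc j) + coeff ?q j)"
      by (simp add: coeff_mult_linS)
    also have "\<dots> \<le> cmod (- r n * coeff ?q (Suc j)) + cmod (coeff ?q j)" by (rule norm_triangle_ineq)
    also have "\<dots> \<le> real (n choose Suc j) + real (n choose j)"
      using IH[of "Suc j"] IH[of j] rn by (simp add: norm_mult)
    also have "\<dots> = real (Suc n choose Suc j)" by simp
    finally show ?thesis using Suc by simp
  qed
qed

lemma W_factor:
  assumes "N \<ge> 2" "a \<in> W N"
  obtains r where "apoly N a = (\<Prod>i<N. [:- r i, 1:])" "\<And>i. i < N \<Longrightarrow> cmod (r i) = 1"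
proof -
  obtain r where r: "smult (lead_coeff (apoly N a)) (\<Prod>i<degree (apoly N a). [:-r i, 1:]) = apoly N a"
    using complex_poly_decompose' by blast
  then have e: "apoly N a = (\<Prod>i<N. [:- r i, 1:])" using assms(1)
    by (simp add: coeff_apoly degree_apoly)
  have "cmod (r i) = 1" if "i < N" for i
  proof -
    have "poly (apoly N a) (r i) = 0" unfolding e poly_prod
      using that by (intro prod_zero) auto
    then show ?thesis using assms(2) by (auto simp: W_def)
  qed
  then show ?thesis using e that by blast
qed

lemma W_bound:
  assumes "N \<ge> 2" "a \<in> W N" "1 \<le> n" "n \<le> N-1"
  shows "cmod (ccoef N a n) \<le> real (N choose n)"
proof -
  obtain r where e: "apoly N a = (\<Prod>i<N. [:- r i, 1:])" and r: "\<And>i. i < N \<Longrightarrow> cmod (r i) = 1"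
    using W_factor[OF assms(1,2)] by blast
  have "N - (N-n) = n" "N - n \<noteq> 0" "N - n \<noteq> N" "N - n < N" using assms by auto
  then have "ccoef N a n = coeff (apoly N a) (N-n)" using assms by (simp add: coeff_apoly)
  also have "cmod \<dots> \<le> real (N choose (N-n))" unfolding e using r by (intro Q_bound) auto
  finally show ?thesis using assms binomial_symmetric[of n N] by simp
qed


lemma W_eq:
  assumes N: "N \<ge> 2" and aW: "a \<in> W N"
    and eq: "(\<Sum>n=1..N-1. cmod (ccoef N a n)^2) = (\<Sum>n=1..N-1. real (N choose n)^2)"
  shows "\<exists>m\<in>{1..N}. a = vtx N m"
proof -
  obtain r where e: "apoly N a = (\<Prod>i<N. [:- r i, 1:])" and rn: "\<And>i. i < N \<Longrightarrow> cmod (r i) = 1"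
    using W_factor[OF N aW] by blast
  have b: "cmod (ccoef N a n) \<le> real (N choose n)" if "n \<in> {1..N-1}" for n
    using W_bound[OF N aW] that by auto
  have "(\<Sum>n=1..N-1. real (N choose n)^2 - cmod (ccoef N a n)^2) = 0"
    by (simp only: sum_subtractf eq) 
  moreover have "\<forall>n\<in>{1..N-1}. real (N choose n)^2 - cmod (ccoef N a n)^2 \<ge> 0"
    using b by (auto intro: power_mono)
  ultimately have h: "\<forall>n\<in>{1..N-1}. real (N choose n)^2 - cmod (ccoef N a n)^2 = 0"
    by (subst (asm) sum_nonneg_eq_0_iff) auto
  have c1: "cmod (ccoef N a 1) = real N" using bspec[OF h, of 1] N by simp
  obtain M where M: "N = Suc M" using N by (cases N) auto
  have "ccoef N a 1 = coeff (apoly N a) M" using N M by (simp add: coeff_apoly)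
  also have "\<dots> = - (\<Sum>i<N. r i)" by (unfold e, unfold M, rule Q_sub)
  finally have c1': "ccoef N a 1 = - (\<Sum>i<N. r i)" .
  define s where "s = (\<Sum>i<N. r i)"
  define w where "w = s / of_nat N"
  have cs: "cmod s = real N" using c1 c1' s_def by simp
  have cw: "cmod w = 1" using cs N by (simp add: w_def norm_divide)
  have ww: "w * cnj w = 1" using complex_norm_square[of w] cw by simp
  have sw: "s = of_nat N * w" using N by (simp add: w_def)
  have rr: "r i * cnj (r i) = 1" if "i < N" for i
    using complex_norm_square[of "r i"] rn[OF that] by simp
  have "complex_of_real (\<Sum>i<N. cmod (r i - w)^2) = (\<Sum>i<N. (r i - w) * cnj (r i - w))"
    by (simp only: of_real_sum complex_norm_square)
  also have "\<dots> = (\<Sum>i<N. (r i * cnj (r i) - r i * cnj w - w * cnj (r i) + w * cnj w))"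
    by (intro sum.cong refl) (simp add: algebra_simps)
  also have "\<dots> = (\<Sum>i<N. (1 - r i * cnj w - w * cnj (r i) + w * cnj w))"
    by (intro sum.cong refl) (simp add: rr)
  also have "\<dots> = of_nat N - s * cnj w - w * cnj s + of_nat N * (w * cnj w)"
    by (simp add: sum.distrib sum_subtractf sum_distrib_left sum_distrib_right s_def)
  also have "\<dots> = 0" using sw ww by (simp add: algebra_simps)
  finally have "(\<Sum>i<N. cmod (r i - w)^2) = 0" by (simp only: of_real_eq_0_iff)
  then have "\<forall>i<N. cmod (r i - w)^2 = 0"
    by (subst (asm) sum_nonneg_eq_0_iff) auto
  then have rw: "\<forall>i<N. r i = w" by auto
  have ep: "apoly N a = [:- w, 1:] ^ N" unfolding e
    using rw by (simp add: prod.cong[of _ _ "\<lambda>i. [:- r i, 1:]" "\<lambda>_. [:- w, 1:]"])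
  have "coeff (apoly N a) 0 = 1" using N by (simp add: coeff_apoly)
  then have "(- w) ^ N = 1" unfolding ep by (simp add: coeff_0_power)
  then have "- w \<in> (\<lambda>k. cis (2 * pi * real k / real N)) ` {..<N}"
    using bij_betw_imp_surj_on[OF Complex.bij_betw_roots_unity[of N]] N by auto
  then obtain k where k: "k < N" "- w = zetaN N ^ k" by (auto simp: zeta_pow)
  define m where "m = (if k = 0 then N else k)"
  have m: "m \<in> {1..N}" "zetaN N ^ m = - w" using k N by (auto simp: m_def zeta_N)
  have "apoly N a = apoly N (vtx N m)" using ep m(2) N by (simp add: apoly_vtx)
  then have "a = vtx N m" using aW N
    by (intro apoly_inj) (auto simp: W_def vtx_def vinv_vecs)
  then show ?thesis using m by blast
qed

lemma sum_roots0:
  assumes N: "N \<ge> 2" and n: "1 \<le> n" "n \<le> N-1"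
  shows "(\<Sum>m=1..N. cnj (zetaN N ^ (m*n))) = 0"
proof -
  define u where "u = cnj (zetaN N ^ n)"
  have um: "cnj (zetaN N ^ (m*n)) = u ^ m" for m
    by (simp add: u_def power_mult[symmetric] mult.commute)
  have uN: "u ^ N = 1" using um[of N] zeta_mult_N[of N n] N
    by (metis complex_cnj_one mult.commute not_numeral_le_zero not_gr0)
  have u1: "u \<noteq> 1"
  proof
    assume "u = 1"
    then have "zetaN N ^ n = 1" unfolding u_def by (metis complex_cnj_cnj complex_cnj_one)
    then have eq: "cis (2 * pi * real n / real N) = cis (2 * pi * real 0 / real N)" by (simp add: zeta_pow)
    have inj: "inj_on (\<lambda>k. cis (2 * pi * real k / real N)) {..<N}"
      using Complex.bij_betw_roots_unity[of N] N by (simp add: bij_betw_def)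
    have "n = 0" by (rule inj_onD[OF inj eq]) (use n N in auto)
    then show False using n by simp
  qed
  have "(\<Sum>m=1..N. cnj (zetaN N ^ (m*n))) = (\<Sum>m=1..N. u ^ m)" by (intro sum.cong refl) (rule um)
  also have "\<dots> = (\<Sum>m<N. u ^ Suc m)" by (simp only: One_nat_def sum.atLeast1_atMost_eq)
  also have "\<dots> = u * (\<Sum>m<N. u ^ m)" by (simp add: sum_distrib_left)
  also have "\<dots> = 0" using u1 uN by (simp add: sum_gp_strict)
  finally show ?thesis .
qed

lemma cmod_diff_sq: "cmod (c - b)^2 = cmod c^2 + cmod b^2 - 2 * Re (c * cnj b)"
  unfolding cmod_power2 by (simp add: power2_eq_square algebra_simps)

lemma cmod_bv: "cmod (bv N m n) = real (N choose n)"
  by (simp add: bv_def norm_mult norm_power)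

lemma sum_far:
  assumes N: "N \<ge> 2" and n: "1 \<le> n" "n \<le> N-1"
  shows "(\<Sum>m=1..N. cmod (c - bv N m n)^2) = real N * (cmod c^2 + real (N choose n)^2)"
proof -
  have "(\<Sum>m=1..N. Re (c * cnj (bv N m n))) = Re (c * of_nat (N choose n) * (\<Sum>m=1..N. cnj (zetaN N ^ (m*n))))"
    by (simp add: bv_def sum_distrib_left mult.assoc)
  also have "\<dots> = 0" using sum_roots0[OF N n] by simp
  finally have z: "(\<Sum>m=1..N. Re (c * cnj (bv N m n))) = 0" .
  have "(\<Sum>m=1..N. cmod (c - bv N m n)^2) =
    (\<Sum>m=1..N. cmod c^2 + real (N choose n)^2) - 2 * (\<Sum>m=1..N. Re (c * cnj (bv N m n)))"
    by (simp add: cmod_diff_sq cmod_bv sum_subtractf sum_distrib_left)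
  also have "\<dots> = real N * (cmod c^2 + real (N choose n)^2)" using z by simp
  finally show ?thesis .
qed

lemma far:
  assumes N: "N \<ge> 2" and a: "a \<in> vecs N" "a \<noteq> (\<lambda>_. 0)"
  shows "\<exists>m\<in>{1..N}. edist N a (vtx N m)^2 > (\<Sum>n=1..N-1. real (N choose n)^2)"
proof (rule ccontr)
  let ?R = "\<Sum>n=1..N-1. real (N choose n)^2"
  let ?S = "\<Sum>n=1..N-1. cmod (ccoef N a n)^2"
  assume "\<not> ?thesis"
  then have le: "\<forall>m\<in>{1..N}. edist N a (vtx N m)^2 \<le> ?R" by auto
  have "(\<Sum>m=1..N. edist N a (vtx N m)^2) = (\<Sum>m=1..N. \<Sum>n=1..N-1. cmod (ccoef N a n - bv N m n)^2)"
    using N by (intro sum.cong refl) (simp add: edist_sq ccoef_vtx)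
  also have "\<dots> = (\<Sum>n=1..N-1. \<Sum>m=1..N. cmod (ccoef N a n - bv N m n)^2)" by (rule sum.swap)
  also have "\<dots> = (\<Sum>n=1..N-1. real N * (cmod (ccoef N a n)^2 + real (N choose n)^2))"
    using N by (intro sum.cong refl) (rule sum_far[OF N], auto)
  also have "\<dots> = real N * ?S + real N * ?R" by (simp only: distrib_left sum.distrib sum_distrib_left)
  finally have eqs: "(\<Sum>m=1..N. edist N a (vtx N m)^2) = real N * ?S + real N * ?R" .
  have "(\<Sum>m=1..N. edist N a (vtx N m)^2) \<le> (\<Sum>m=1..N. ?R)" using le by (intro sum_mono) auto
  also have "\<dots> = real N * ?R" by simp
  finally have "real N * ?S \<le> 0" using eqs by simp
  then have S0: "?S \<le> 0" using N by (simp add: mult_le_0_iff)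
  obtain j where j: "a j \<noteq> 0" using a(2) by auto
  then have j1: "j \<in> {1..N-1}" using a(1) unfolding vecs_def by (cases "j < 1 \<or> N \<le> j") auto
  have "?S = (\<Sum>j=1..N-1. a j^2)" using norm_eq[of a N] by simp
  also have "\<dots> > 0" using j j1 by (intro sum_pos2[of _ j]) auto
  finally show False using S0 by simp
qed


lemma edist_sym: "edist N u v = edist N v u"
  by (simp add: edist_def power2_commute)

lemma dist0: "edist N a (\<lambda>_. 0) ^2 = (\<Sum>n=1..N-1. cmod (ccoef N a n)^2)"
proof -
  have "ccoef N (\<lambda>_. 0) n = 0" for n by (simp add: ccoef_def)
  then show ?thesis by (simp add: edist_sq)
qed

lemma inW_bound: "N \<ge> 2 \<Longrightarrow> a \<in> W N \<Longrightarrow> edist N a (\<lambda>_. 0) ^2 \<le> (\<Sum>n=1..N-1. real (N choose n)^2)"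
  unfolding dist0 by (intro sum_mono power_mono W_bound) auto

lemma vtx_dist: "N \<ge> 2 \<Longrightarrow> edist N (vtx N m) (\<lambda>_. 0) ^2 = (\<Sum>n=1..N-1. real (N choose n)^2)"
  unfolding dist0 by (intro sum.cong refl) (simp add: ccoef_vtx cmod_bv)

theorem mainTheorem11:
  fixes N :: nat and T :: "(nat \<Rightarrow> real) \<Rightarrow> (nat \<Rightarrow> real)"
  assumes "N \<ge> 2"
    and "bij_betw T (W N) (W N)"
    and "\<forall>u\<in>W N. \<forall>v\<in>W N. edist N (T u) (T v) = edist N u v"
  shows "T (\<lambda>_. 0) = (\<lambda>_. 0) \<and>
         T ` {vertex N n | n. n \<in> {1..N}} = {vertex N n | n. n \<in> {1..N}}"
proof -
  note N = assms(1)
  define Z :: "nat \<Rightarrow> real" where "Z = (\<lambda>_. 0)"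
  define R where "R = (\<Sum>n=1..N-1. real (N choose n)^2)"
  have ZW: "Z \<in> W N" using zero_W[OF N] by (simp add: Z_def)
  have img: "T ` W N = W N" using assms(2) by (simp add: bij_betw_def)
  have iso: "edist N (T u) (T v) = edist N u v" if "u \<in> W N" "v \<in> W N" for u v
    using assms(3) that by blast
  have TZ: "T Z = Z"
  proof (rule ccontr)
    assume ne: "T Z \<noteq> Z"
    have TZW: "T Z \<in> W N" using ZW img by blast
    then have "T Z \<in> vecs N" by (simp add: W_def)
    then obtain m where m: "m \<in> {1..N}" "edist N (T Z) (vtx N m)^2 > R"
      using far[OF N \<open>T Z \<in> vecs N\<close>] ne unfolding R_def Z_def by blast
    have "vtx N m \<in> T ` W N" using img vtx_W[OF N] by simp
    then obtain u where u: "u \<in> W N" "vtx N m = T u" by blast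
    have "edist N (T Z) (vtx N m) = edist N u Z" using iso[OF ZW u(1)] u(2) by (simp add: edist_sym)
    moreover have "edist N u Z ^2 \<le> R" using inW_bound[OF N u(1)] by (simp add: Z_def R_def)
    ultimately show False using m(2) by simp
  qed
  define S where "S = {a \<in> W N. edist N a Z ^2 = R}"
  have VS: "{vertex N n | n. n \<in> {1..N}} = S"
  proof
    show "{vertex N n | n. n \<in> {1..N}} \<subseteq> S"
      using vertex_eq[OF N] vtx_W[OF N] vtx_dist[OF N] by (auto simp: S_def Z_def R_def)
    show "S \<subseteq> {vertex N n | n. n \<in> {1..N}}"
    proof
      fix a assume "a \<in> S"
      then have a: "a \<in> W N" "edist N a Z ^2 = R" by (auto simp: S_def)
      then obtain m where "m \<in> {1..N}" "a = vtx N m"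
        using W_eq[OF N a(1)] dist0[of N a] by (auto simp: Z_def R_def)
      then show "a \<in> {vertex N n | n. n \<in> {1..N}}" using vertex_eq[OF N] by auto
    qed
  qed
  have "T ` S = S"
  proof
    show "T ` S \<subseteq> S"
    proof
      fix b assume "b \<in> T ` S"
      then obtain a where a: "a \<in> S" "b = T a" by blast
      then have aW: "a \<in> W N" by (simp add: S_def)
      have "T a \<in> W N" using aW img by blast
      moreover have "edist N (T a) Z = edist N a Z" using iso[OF aW ZW] TZ by simp
      ultimately show "b \<in> S" using a by (simp add: S_def)
    qed
    show "S \<subseteq> T ` S"
    proof
      fix b assume b: "b \<in> S"
      then have "b \<in> T ` W N" using img by (simp add: S_def)
      then obtain a where a: "a \<in> W N" "b = T a" by blast
      have "edist N b Z = edist N a Z" using iso[OF a(1) ZW] TZ a(2) by simp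
      then have "a \<in> S" using a(1) b by (simp add: S_def)
      then show "b \<in> T ` S" using a(2) by blast
    qed
  qed
  then show ?thesis using TZ VS by (simp add: Z_def)
qed

end
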